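(* Let $d>0$, $u>0$, $K_z>0$, $K_x>0$, $k>0$, $\sigma>0$, $l>0$, $\rho\ge 0$, and let $S:\mathbb{R}\to\mathbb{R}$ be a smooth odd saturating function with $S(0)=0$ and $S'(0)=1$. Let $\eta(z)=\exp(-z^2/(2\sigma^2))$ and consider, with bias $b=0$, the planar system $$\dot z = -d\,z + u\,S(z) + b - K_z\,\eta(z)\,(z-x),\qquad \dot x = (1-\eta(z))\,K_x\!\left(\tfrac{\rho}{l}\tanh(kz) - x\right) - \eta(z)\,(x-z).$$ Set $u^*=d$. Then the equilibrium $(z,x)=(0,0)$ is locally exponentially stable for $0<u<u^*$ and unstable for $u>u^*$.
   Context: This system models an agent choosing between two spatially separated tasks: $z$ is its opinion (preference, $z>0$ favoring task 1, $z<0$ task 2), $x$ its horizontal position, $d$ a damping coefficient, $u$ an attention gain, $b$ a bias, $K_z$ a coupling weight, $K_x$ a velocity gain. *)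

theory Defs
  imports "HOL-Analysis.Analysis"
begin

definition smooth_fun :: "(real \<Rightarrow> real) \<Rightarrow> bool" where
  "smooth_fun S \<longleftrightarrow> (\<forall>n x. ((deriv ^^ n) S) differentiable (at x))"

definition odd_fun :: "(real \<Rightarrow> real) \<Rightarrow> bool" where
  "odd_fun S \<longleftrightarrow> (\<forall>x. S (- x) = - S x)"

definition saturating :: "(real \<Rightarrow> real) \<Rightarrow> bool" where
  "saturating S \<longleftrightarrow> bounded (range S) \<and> mono S"

definition eta :: "real \<Rightarrow> real \<Rightarrow> real" where
  "eta \<sigma> z = exp (- (z\<^sup>2) / (2 * \<sigma>\<^sup>2))"

definition task_field ::
  "real \<Rightarrow> real \<Rightarrow> real \<Rightarrow> real \<Rightarrow> real \<Rightarrow> real \<Rightarrow> real \<Rightarrow> real \<Rightarrow> real \<Rightarrow> (real \<Rightarrow> real)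
   \<Rightarrow> real \<times> real \<Rightarrow> real \<times> real" where
  "task_field d u b Kz Kx k \<sigma> l \<rho> S p =
     (let z = fst p; x = snd p in
       (- d * z + u * S z + b - Kz * eta \<sigma> z * (z - x),
        (1 - eta \<sigma> z) * Kx * (\<rho> / l * tanh (k * z) - x) - eta \<sigma> z * (x - z)))"

definition is_solution :: "(real \<times> real \<Rightarrow> real \<times> real) \<Rightarrow> (real \<Rightarrow> real \<times> real) \<Rightarrow> real \<Rightarrow> bool" where
  "is_solution F f T \<longleftrightarrow>
     (\<forall>t\<in>{0..T}. (f has_vector_derivative F (f t)) (at t within {0..T}))"

definition loc_exp_stable_origin :: "(real \<times> real \<Rightarrow> real \<times> real) \<Rightarrow> bool" where
  "loc_exp_stable_origin F \<longleftrightarrow> F (0,0) = (0,0) \<and>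
     (\<exists>\<delta>>0. \<exists>M>0. \<exists>c>0. \<forall>f T. T \<ge> 0 \<longrightarrow> is_solution F f T \<longrightarrow> norm (f 0) < \<delta> \<longrightarrow>
        (\<forall>t\<in>{0..T}. norm (f t) \<le> M * exp (- c * t) * norm (f 0)))"

definition lyap_stable_origin :: "(real \<times> real \<Rightarrow> real \<times> real) \<Rightarrow> bool" where
  "lyap_stable_origin F \<longleftrightarrow>
     (\<forall>\<epsilon>>0. \<exists>\<delta>>0. \<forall>f T. T \<ge> 0 \<longrightarrow> is_solution F f T \<longrightarrow> norm (f 0) < \<delta> \<longrightarrow>
        (\<forall>t\<in>{0..T}. norm (f t) < \<epsilon>))"

definition unstable_origin :: "(real \<times> real \<Rightarrow> real \<times> real) \<Rightarrow> bool" where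
  "unstable_origin F \<longleftrightarrow> F (0,0) = (0,0) \<and> \<not> lyap_stable_origin F"

end

theory Submission
  imports Defs
begin


lemma lip_C1:
  fixes g g' :: "real \<Rightarrow> real"
  assumes der: "\<And>x. (g has_real_derivative g' x) (at x)" and cont: "continuous_on {a..b} g'"
  shows "\<exists>B\<ge>0. \<forall>x\<in>{a..b}. \<forall>y\<in>{a..b}. \<bar>g x - g y\<bar> \<le> B * \<bar>x - y\<bar>"
proof -
  have "compact (g' ` {a..b})" by (rule compact_continuous_image[OF cont]) simp
  then have "bounded (g' ` {a..b})" by (rule compact_imp_bounded)
  then obtain B0 where B0: "\<forall>x\<in>{a..b}. \<bar>g' x\<bar> \<le> B0" unfolding bounded_real by auto
  define B where "B = max B0 0"
  have B: "\<forall>x\<in>{a..b}. \<bar>g' x\<bar> \<le> B" "B \<ge> 0" using B0 by (auto simp: B_def)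
  have main: "\<bar>g y - g x\<bar> \<le> B * (y - x)" if "x \<in> {a..b}" "y \<in> {a..b}" "x < y" for x y
  proof -
    obtain z where z: "x < z" "z < y" "g y - g x = (y - x) * g' z"
      using MVT2[OF \<open>x < y\<close>, of g g'] der by blast
    have "z \<in> {a..b}" using z that by auto
    then have "\<bar>g' z\<bar> \<le> B" using B by auto
    then show ?thesis using z that by (simp add: abs_mult mult.commute mult_left_mono)
  qed
  have "\<bar>g x - g y\<bar> \<le> B * \<bar>x - y\<bar>" if "x \<in> {a..b}" "y \<in> {a..b}" for x y
  proof (cases x y rule: linorder_cases)
    case less then show ?thesis using main[of x y] that by (simp add: abs_minus_commute)
  next
    case equal then show ?thesis by simp
  next
    case greater then show ?thesis using main[of y x] that by (simp add: abs_minus_commute)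
  qed
  then show ?thesis using B by blast
qed

lemma lip_mult:
  fixes a b a' b' :: real
  assumes "\<bar>a\<bar> \<le> A" "\<bar>b'\<bar> \<le> B" "\<bar>b - b'\<bar> \<le> \<beta>" "\<bar>a - a'\<bar> \<le> \<alpha>"
  shows "\<bar>a * b - a' * b'\<bar> \<le> A * \<beta> + B * \<alpha>"
proof -
  have "a * b - a' * b' = a * (b - b') + b' * (a - a')" by (simp add: algebra_simps)
  then have "\<bar>a * b - a' * b'\<bar> \<le> \<bar>a\<bar> * \<bar>b - b'\<bar> + \<bar>b'\<bar> * \<bar>a - a'\<bar>"
    by (simp add: abs_mult[symmetric] abs_triangle_ineq)
  also have "\<dots> \<le> A * \<beta> + B * \<alpha>"
    using assms by (intro add_mono mult_mono) auto
  finally show ?thesis .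
qed

lemma eta_deriv: "\<sigma> \<noteq> 0 \<Longrightarrow> (eta \<sigma> has_real_derivative (eta \<sigma> x * (- x / \<sigma>\<^sup>2))) (at x)"
  unfolding eta_def
  by (auto intro!: derivative_eq_intros simp: field_simps power2_eq_square)

lemma eta_pos: "0 < eta \<sigma> z" by (simp add: eta_def)
lemma eta_le1: "eta \<sigma> z \<le> 1"
  unfolding eta_def by (auto simp: divide_nonneg_nonneg)

lemma tanh_deriv: "((\<lambda>z. tanh (k * z)) has_real_derivative ((1 - tanh (k * x)^2) * k)) (at x)"
  by (auto intro!: derivative_eq_intros)

lemma abs_tanh_le1: "\<bar>tanh (x::real)\<bar> \<le> 1"
  using tanh_real_bounds[of x] by auto

lemma deriv0_small:
  fixes g :: "real \<Rightarrow> real"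
  assumes "(g has_real_derivative D) (at 0)" "g 0 = 0" "\<epsilon> > 0"
  shows "\<exists>r>0. \<forall>z. \<bar>z\<bar> < r \<longrightarrow> \<bar>g z - D * z\<bar> \<le> \<epsilon> * \<bar>z\<bar>"
proof -
  have "(\<lambda>h. (g (0 + h) - g 0) / h) \<midarrow>0\<rightarrow> D" using assms(1) by (simp add: DERIV_def)
  then have "(\<lambda>h. g h / h) \<midarrow>0\<rightarrow> D" using assms(2) by simp
  from LIM_D[OF this assms(3)] obtain s where s: "s > 0"
    "\<And>x. x \<noteq> 0 \<and> norm (x - 0) < s \<longrightarrow> norm (g x / x - D) < \<epsilon>" by blast
  have "\<bar>g z - D * z\<bar> \<le> \<epsilon> * \<bar>z\<bar>" if "\<bar>z\<bar> < s" for z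
  proof (cases "z = 0")
    case True then show ?thesis using assms(2) by simp
  next
    case False
    then have "\<bar>g z / z - D\<bar> < \<epsilon>" using s that by auto
    moreover have "g z - D * z = z * (g z / z - D)" using False by (simp add: field_simps)
    ultimately show ?thesis using False
      by (simp add: abs_mult mult.commute mult_strict_right_mono less_imp_le)
  qed
  then show ?thesis using s by blast
qed

lemma one_minus_eta: "\<sigma> > 0 \<Longrightarrow> 0 \<le> 1 - eta \<sigma> z \<and> 1 - eta \<sigma> z \<le> z\<^sup>2 / (2 * \<sigma>\<^sup>2)"
  using exp_ge_add_one_self[of "- (z\<^sup>2) / (2 * \<sigma>\<^sup>2)"] eta_le1[of \<sigma> z]
  by (simp add: eta_def)



lemma ode_exists:
  fixes G :: "real \<times> real \<Rightarrow> real \<times> real" and p0 :: "real \<times> real"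
  assumes lip: "\<And>p q. norm (G p - G q) \<le> L * norm (p - q)" and L: "L > 0" and T: "T \<ge> 0"
  shows "\<exists>f. f 0 = p0 \<and> is_solution G f T"
proof -
  define cl where "cl t = max 0 (min T t)" for t
  have cl_in: "cl t \<in> {0..T}" for t using T by (auto simp: cl_def)
  have cl_id: "t \<in> {0..T} \<Longrightarrow> cl t = t" for t by (auto simp: cl_def)
  have cl_cont: "continuous_on UNIV cl" unfolding cl_def by (intro continuous_intros)
  have "L-lipschitz_on UNIV G"
    using L lip by (auto intro!: lipschitz_onI simp: dist_norm)
  then have contG: "continuous_on UNIV G" by (rule lipschitz_on_continuous_on)
  define k where "k h s = G (exp (2 * L * s) *\<^sub>R apply_bcontfun h s)" for h :: "real \<Rightarrow>\<^sub>C (real \<times> real)" and s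
  have kcont: "continuous_on S (k h)" for h S
    unfolding k_def
    by (rule continuous_on_compose2[OF contG]) (auto intro!: continuous_intros)
  have kint: "k h integrable_on {a..b}" for h a b
    by (rule integrable_continuous_interval[OF kcont])
  define psi where "psi h t = exp (-2 * L * t) *\<^sub>R (p0 + integral {0..t} (k h))" for h t
  have psicont: "continuous_on {0..T} (psi h)" for h
    unfolding psi_def
    by (intro continuous_intros indefinite_integral_continuous_1 kint)
  define Phi0 where "Phi0 h t = psi h (cl t)" for h t
  have mem: "Phi0 h \<in> bcontfun" for h
  proof -
    have c: "continuous_on UNIV (Phi0 h)"
      unfolding Phi0_def
      by (rule continuous_on_compose2[OF psicont[of h] cl_cont]) (use cl_in in auto)
    have "range (Phi0 h) \<subseteq> psi h ` {0..T}" using cl_in by (auto simp: Phi0_def)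
    moreover have "compact (psi h ` {0..T})"
      by (rule compact_continuous_image[OF psicont]) simp
    ultimately have "bounded (range (Phi0 h))"
      using compact_imp_bounded bounded_subset by blast
    with c show ?thesis by (simp add: bcontfun_def)
  qed
  define Phi where "Phi h = Bcontfun (Phi0 h)" for h
  have app: "apply_bcontfun (Phi h) = Phi0 h" for h
    by (simp add: Phi_def Bcontfun_inverse mem)
  have contr: "dist (Phi h1) (Phi h2) \<le> (1/2) * dist h1 h2" for h1 h2
  proof (rule dist_bound)
    fix t
    define c where "c = cl t"
    define D where "D = dist h1 h2"
    have c: "0 \<le> c" "c \<le> T" using cl_in[of t] by (auto simp: c_def)
    have D: "0 \<le> D" by (simp add: D_def)
    have pt: "norm (k h1 s - k h2 s) \<le> L * exp (2 * L * s) * D" for s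
    proof -
      have "norm (k h1 s - k h2 s) \<le> L * norm (exp (2 * L * s) *\<^sub>R apply_bcontfun h1 s - exp (2 * L * s) *\<^sub>R apply_bcontfun h2 s)"
        unfolding k_def by (rule lip)
      also have "\<dots> = L * (exp (2 * L * s) * dist (apply_bcontfun h1 s) (apply_bcontfun h2 s))"
        by (simp add: dist_norm flip: scaleR_diff_right)
      also have "\<dots> \<le> L * (exp (2 * L * s) * D)"
        unfolding D_def using L by (intro mult_left_mono dist_bounded) auto
      finally show ?thesis by (simp add: mult.assoc)
    qed
    have FT: "((\<lambda>s. L * exp (2 * L * s) * D) has_integral (D * exp (2 * L * c) / 2 - D * exp (2 * L * 0) / 2)) {0..c}"
      apply (rule fundamental_theorem_of_calculus)
      using c apply simp
      apply (rule has_real_derivative_iff_has_vector_derivative[THEN iffD1])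
      using L by (auto intro!: derivative_eq_intros)
    have I: "integral {0..c} (\<lambda>s. L * exp (2 * L * s) * D) = D * (exp (2 * L * c) - 1) / 2"
      using integral_unique[OF FT] by (simp add: field_simps)
    have "norm (integral {0..c} (\<lambda>s. k h1 s - k h2 s)) \<le> integral {0..c} (\<lambda>s. L * exp (2 * L * s) * D)"
      by (rule integral_norm_bound_integral) (use FT pt kint in \<open>auto intro: integrable_diff\<close>)
    moreover have "integral {0..c} (\<lambda>s. k h1 s - k h2 s) = integral {0..c} (k h1) - integral {0..c} (k h2)"
      by (rule integral_diff[OF kint kint])
    ultimately have N: "norm (integral {0..c} (k h1) - integral {0..c} (k h2)) \<le> D * (exp (2 * L * c) - 1) / 2"
      using I by metis
    have "dist (apply_bcontfun (Phi h1) t) (apply_bcontfun (Phi h2) t)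
        = exp (-2 * L * c) * norm (integral {0..c} (k h1) - integral {0..c} (k h2))"
      by (simp add: app Phi0_def psi_def c_def dist_norm flip: scaleR_diff_right)
    also have "\<dots> \<le> exp (-2 * L * c) * (D * (exp (2 * L * c) - 1) / 2)"
      by (intro mult_left_mono N) auto
    also have "\<dots> = D * (1 - exp (-2 * L * c)) / 2"
      by (simp add: field_simps flip: exp_add)
    also have "\<dots> \<le> D / 2" using D by (simp add: field_simps)
    finally show "dist (apply_bcontfun (Phi h1) t) (apply_bcontfun (Phi h2) t) \<le> 1 / 2 * dist h1 h2"
      by (simp add: D_def)
  qed
  obtain h where h: "Phi h = h"
    using banach_fix_type[of "1/2" Phi] contr by auto
  define f where "f t = exp (2 * L * t) *\<^sub>R apply_bcontfun h t" for t
  have kh: "k h = (\<lambda>s. G (f s))" by (simp add: k_def f_def fun_eq_iff)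
  have feq: "f t = p0 + integral {0..t} (\<lambda>s. G (f s))" if "t \<in> {0..T}" for t
  proof -
    have "apply_bcontfun h t = psi h t" using h app[of h] cl_id[OF that]
      by (metis Phi0_def)
    then show ?thesis
      using kh by (simp add: f_def psi_def exp_minus_inverse flip: exp_add)
  qed
  have fcont: "continuous_on UNIV f" unfolding f_def by (intro continuous_intros) auto
  have Gf: "continuous_on {0..T} (\<lambda>s. G (f s))"
    using continuous_on_compose2[OF contG continuous_on_subset[OF fcont]] by auto
  show ?thesis
  proof (intro exI conjI)
    show "f 0 = p0" using feq[of 0] T by simp
    show "is_solution G f T" unfolding is_solution_def
    proof
      fix t assume t: "t \<in> {0..T}"
      have "((\<lambda>u. p0 + integral {0..u} (\<lambda>s. G (f s))) has_vector_derivative (0 + G (f t))) (at t within {0..T})"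
        by (intro has_vector_derivative_add has_vector_derivative_const integral_has_vector_derivative Gf t)
      then show "(f has_vector_derivative G (f t)) (at t within {0..T})"
        using has_vector_derivative_transform[OF t feq] by simp
    qed
  qed
qed


definition Vf :: "real \<Rightarrow> real \<Rightarrow> real \<times> real \<Rightarrow> real" where
  "Vf Kz e p = (fst p + Kz * snd p)\<^sup>2 - e * Kz * (snd p)\<^sup>2"

lemma V_deriv:
  assumes "(f has_vector_derivative (v::real\<times>real)) (at t within X)"
  shows "((\<lambda>t. Vf Kz e (f t)) has_real_derivative
     (2 * (fst (f t) + Kz * snd (f t)) * (fst v + Kz * snd v) - 2 * e * Kz * snd (f t) * snd v)) (at t within X)"
proof -
  have "((\<lambda>t. fst (f t)) has_vector_derivative fst v) (at t within X)"
    using has_derivative_fst[OF assms[unfolded has_vector_derivative_def]]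
    unfolding has_vector_derivative_def by simp
  then have d1: "((\<lambda>t. fst (f t)) has_real_derivative fst v) (at t within X)"
    by (simp add: has_real_derivative_iff_has_vector_derivative)
  have "((\<lambda>t. snd (f t)) has_vector_derivative snd v) (at t within X)"
    using has_derivative_snd[OF assms[unfolded has_vector_derivative_def]]
    unfolding has_vector_derivative_def by simp
  then have d2: "((\<lambda>t. snd (f t)) has_real_derivative snd v) (at t within X)"
    by (simp add: has_real_derivative_iff_has_vector_derivative)
  show ?thesis unfolding Vf_def
    by (rule derivative_eq_intros d1 d2 refl | simp)+ (simp add: algebra_simps power2_eq_square)
qed

lemma core:
  fixes z x r1 r2 e Kz \<epsilon> :: real
  assumes Kz: "Kz > 0" and eps: "\<epsilon> \<ge> 0" and h1: "\<bar>r1\<bar> \<le> \<epsilon> * (\<bar>z\<bar> + \<bar>x\<bar>)" and h2: "\<bar>r2\<bar> \<le> \<epsilon> * (\<bar>z\<bar> + \<bar>x\<bar>)"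
  shows "\<bar>2 * (z + Kz * x) * (((e - Kz) * z + Kz * x + r1) + Kz * (z - x + r2)) - 2 * e * Kz * x * (z - x + r2)
          - 2 * e * (z\<^sup>2 + Kz * x\<^sup>2)\<bar> \<le> \<epsilon> * (4 * (1 + Kz)\<^sup>2 + 4 * \<bar>e\<bar> * Kz) * (z\<^sup>2 + x\<^sup>2)"
proof -
  define A where "A = \<bar>z\<bar> + \<bar>x\<bar>"
  have A0: "A \<ge> 0" by (simp add: A_def)
  have eq: "2 * (z + Kz * x) * (((e - Kz) * z + Kz * x + r1) + Kz * (z - x + r2)) - 2 * e * Kz * x * (z - x + r2)
          - 2 * e * (z\<^sup>2 + Kz * x\<^sup>2) = 2 * (z + Kz * x) * (r1 + Kz * r2) + (- 2 * e * Kz * x) * r2"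
    by (simp add: algebra_simps power2_eq_square)
  have a1: "\<bar>z + Kz * x\<bar> \<le> (1 + Kz) * A"
  proof -
    have "\<bar>z + Kz * x\<bar> \<le> \<bar>z\<bar> + Kz * \<bar>x\<bar>" using Kz by (simp add: abs_mult abs_triangle_ineq[THEN order_trans])
    also have "\<dots> \<le> (1 + Kz) * A" using Kz by (simp add: A_def algebra_simps)
    finally show ?thesis .
  qed
  have a2: "\<bar>r1 + Kz * r2\<bar> \<le> (1 + Kz) * (\<epsilon> * A)"
  proof -
    have "\<bar>r1 + Kz * r2\<bar> \<le> \<bar>r1\<bar> + Kz * \<bar>r2\<bar>" using Kz
      by (metis abs_mult abs_of_pos abs_triangle_ineq)
    also have "\<dots> \<le> \<epsilon> * A + Kz * (\<epsilon> * A)" using h1 h2 Kz unfolding A_def by (intro add_mono mult_left_mono) auto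
    finally show ?thesis by (simp add: algebra_simps)
  qed
  have t1: "\<bar>2 * (z + Kz * x) * (r1 + Kz * r2)\<bar> \<le> 2 * ((1 + Kz) * A) * ((1 + Kz) * (\<epsilon> * A))"
    unfolding abs_mult using a1 a2 by (intro mult_mono) auto
  have t2: "\<bar>(- 2 * e * Kz * x) * r2\<bar> \<le> (2 * \<bar>e\<bar> * Kz * A) * (\<epsilon> * A)"
  proof -
    have "\<bar>- 2 * e * Kz * x\<bar> = 2 * \<bar>e\<bar> * Kz * \<bar>x\<bar>" using Kz by (simp add: abs_mult)
    also have "\<dots> \<le> 2 * \<bar>e\<bar> * Kz * A" using Kz by (intro mult_left_mono) (auto simp: A_def)
    finally show ?thesis unfolding abs_mult[of _ r2] using h2 A_def Kz
      by (intro mult_mono) auto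
  qed
  have sq: "A\<^sup>2 \<le> 2 * (z\<^sup>2 + x\<^sup>2)"
  proof -
    have "A\<^sup>2 = \<bar>z\<bar>\<^sup>2 + \<bar>x\<bar>\<^sup>2 + 2 * \<bar>z\<bar> * \<bar>x\<bar>" by (simp add: A_def power2_eq_square algebra_simps)
    moreover have "2 * \<bar>z\<bar> * \<bar>x\<bar> \<le> \<bar>z\<bar>\<^sup>2 + \<bar>x\<bar>\<^sup>2" using sum_squares_bound[of "\<bar>z\<bar>" "\<bar>x\<bar>"] by simp
    ultimately show ?thesis by simp
  qed
  have "\<bar>2 * (z + Kz * x) * (r1 + Kz * r2) + (- 2 * e * Kz * x) * r2\<bar> \<le>
      2 * ((1 + Kz) * A) * ((1 + Kz) * (\<epsilon> * A)) + (2 * \<bar>e\<bar> * Kz * A) * (\<epsilon> * A)"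
    using t1 t2 abs_triangle_ineq by (smt (verit))
  also have "\<dots> = \<epsilon> * (2 * (1 + Kz)\<^sup>2 + 2 * \<bar>e\<bar> * Kz) * A\<^sup>2" by (simp add: algebra_simps power2_eq_square)
  also have "\<dots> \<le> \<epsilon> * (2 * (1 + Kz)\<^sup>2 + 2 * \<bar>e\<bar> * Kz) * (2 * (z\<^sup>2 + x\<^sup>2))"
    using sq eps Kz by (intro mult_left_mono) auto
  also have "\<dots> = \<epsilon> * (4 * (1 + Kz)\<^sup>2 + 4 * \<bar>e\<bar> * Kz) * (z\<^sup>2 + x\<^sup>2)" by (simp add: algebra_simps)
  finally show ?thesis unfolding eq .
qed

lemma V_upper: "Kz > 0 \<Longrightarrow> Vf Kz e p \<le> (2 + 2 * Kz\<^sup>2 + \<bar>e\<bar> * Kz) * ((fst p)\<^sup>2 + (snd p)\<^sup>2)"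
proof -
  assume Kz: "Kz > 0"
  obtain z x where p: "p = (z, x)" by (cases p)
  have "(z + Kz * x)\<^sup>2 \<le> 2 * z\<^sup>2 + 2 * (Kz * x)\<^sup>2"
    using sum_squares_bound[of z "Kz * x"] by (simp add: power2_eq_square algebra_simps)
  moreover have "- e * Kz * x\<^sup>2 \<le> \<bar>e\<bar> * Kz * x\<^sup>2" using Kz
    by (intro mult_right_mono) (auto simp: mult_right_mono)
  moreover have "0 \<le> 2 * x\<^sup>2 + Kz * (\<bar>e\<bar> * z\<^sup>2) + 2 * (Kz\<^sup>2 * z\<^sup>2)" using Kz by simp
  ultimately show ?thesis unfolding p Vf_def by (simp add: algebra_simps power_mult_distrib)
qed

lemma exp_mono_dec:
  fixes phi D :: "real \<Rightarrow> real"
  assumes der: "\<And>t. t \<in> {0..T} \<Longrightarrow> (phi has_real_derivative D t) (at t within {0..T})"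
    and bnd: "\<And>t. 0 < t \<Longrightarrow> t < T' \<Longrightarrow> D t \<le> c * phi t" and T': "0 \<le> T'" "T' \<le> T"
  shows "exp (- c * T') * phi T' \<le> phi 0"
proof -
  have cont: "continuous_on {0..T} phi"
    using der by (metis DERIV_continuous continuous_on_eq_continuous_within)
  have "(\<lambda>t. exp (- c * t) * phi t) T' \<le> (\<lambda>t. exp (- c * t) * phi t) 0"
  proof (rule DERIV_nonpos_imp_decreasing_open[OF T'(1)])
    fix t assume t: "0 < t" "t < T'"
    then have "t \<in> interior {0..T}" using T' by auto
    then have "(phi has_real_derivative D t) (at t)" using der[of t] t T' at_within_interior by fastforce
    then have "((\<lambda>t. exp (- c * t) * phi t) has_real_derivative (exp (- c * t) * (D t - c * phi t))) (at t)"
      by (auto intro!: derivative_eq_intros simp: algebra_simps)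
    moreover have "exp (- c * t) * (D t - c * phi t) \<le> 0"
      using bnd[OF t] by (simp add: mult_nonneg_nonpos)
    ultimately show "\<exists>y. ((\<lambda>t. exp (- c * t) * phi t) has_real_derivative y) (at t) \<and> y \<le> 0" by blast
  next
    show "continuous_on {0..T'} (\<lambda>t. exp (- c * t) * phi t)"
      using continuous_on_subset[OF cont, of "{0..T'}"] T' by (auto intro!: continuous_intros)
  qed
  then show ?thesis by simp
qed

lemma exp_mono_inc:
  fixes phi D :: "real \<Rightarrow> real"
  assumes der: "\<And>t. t \<in> {0..T} \<Longrightarrow> (phi has_real_derivative D t) (at t within {0..T})"
    and bnd: "\<And>t. 0 < t \<Longrightarrow> t < T' \<Longrightarrow> D t \<ge> c * phi t" and T': "0 \<le> T'" "T' \<le> T"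
  shows "phi 0 \<le> exp (- c * T') * phi T'"
proof -
  have "exp (- c * T') * (- phi T') \<le> - phi 0"
    by (rule exp_mono_dec[where D = "\<lambda>t. - D t" and T = T]) (use der bnd T' in \<open>auto intro: derivative_eq_intros\<close>)
  then show ?thesis by simp
qed


lemma V_lower:
  assumes Kz: "Kz > 0" and e: "e < 0"
  shows "\<exists>lam>0. \<forall>p. lam * ((fst p)\<^sup>2 + (snd p)\<^sup>2) \<le> Vf Kz e p"
proof -
  define q where "q = - e * Kz"
  have q: "q > 0" using Kz e by (simp add: q_def mult_neg_pos)
  define th where "th = min 1 (q / (2 * Kz\<^sup>2))"
  have th: "th > 0" "th \<le> 1" using q Kz by (auto simp: th_def)
  have thK: "th * Kz\<^sup>2 \<le> q / 2"
  proof -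
    have "th \<le> q / (2 * Kz\<^sup>2)" by (simp add: th_def)
    then show ?thesis using Kz by (simp add: pos_le_divide_eq mult.commute)
  qed
  define lam where "lam = min (th / 2) (q / 2)"
  have lam: "lam > 0" using th q by (simp add: lam_def)
  have "lam * ((fst p)\<^sup>2 + (snd p)\<^sup>2) \<le> Vf Kz e p" for p
  proof -
    obtain z x where p: "p = (z, x)" by (cases p)
    have s1: "(z + Kz * x)\<^sup>2 \<ge> z\<^sup>2 / 2 - Kz\<^sup>2 * x\<^sup>2"
    proof -
      have "(z + Kz * x)\<^sup>2 - (z\<^sup>2 / 2 - Kz\<^sup>2 * x\<^sup>2) = (z + 2 * Kz * x)\<^sup>2 / 2"
        by (simp add: power2_eq_square algebra_simps)
      then show ?thesis by (smt (verit) zero_le_power2 divide_nonneg_pos)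
    qed
    have s2: "(z + Kz * x)\<^sup>2 \<ge> th * (z\<^sup>2 / 2 - Kz\<^sup>2 * x\<^sup>2)"
    proof -
      have "th * (z\<^sup>2 / 2 - Kz\<^sup>2 * x\<^sup>2) \<le> th * (z + Kz * x)\<^sup>2" using s1 th by (intro mult_left_mono) auto
      also have "\<dots> \<le> 1 * (z + Kz * x)\<^sup>2" using th by (intro mult_right_mono) auto
      finally show ?thesis by simp
    qed
    have s3: "th * Kz\<^sup>2 * x\<^sup>2 \<le> q / 2 * x\<^sup>2" using thK by (intro mult_right_mono) auto
    have s4: "lam * z\<^sup>2 \<le> th / 2 * z\<^sup>2" by (intro mult_right_mono) (auto simp: lam_def)
    have s5: "lam * x\<^sup>2 \<le> q / 2 * x\<^sup>2" by (intro mult_right_mono) (auto simp: lam_def)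
    have "Vf Kz e p = (z + Kz * x)\<^sup>2 + q * x\<^sup>2" by (simp add: p Vf_def q_def)
    moreover have "th * (z\<^sup>2 / 2 - Kz\<^sup>2 * x\<^sup>2) = th / 2 * z\<^sup>2 - th * Kz\<^sup>2 * x\<^sup>2" by (simp add: algebra_simps)
    ultimately show ?thesis using s2 s3 s4 s5 p by (simp add: algebra_simps)
  qed
  then show ?thesis using lam by blast
qed

lemma first_hit:
  fixes h :: "real \<Rightarrow> real"
  assumes cont: "continuous_on {0..T} h" and h0: "h 0 < a" and t1: "t1 \<in> {0..T}" "a \<le> h t1"
  shows "\<exists>t\<in>{0..T}. h t = a \<and> (\<forall>s. 0 \<le> s \<longrightarrow> s < t \<longrightarrow> h s < a)"
proof -
  define B where "B = {t \<in> {0..T}. (\<lambda>_. a) t \<le> h t}"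
  have cl: "closed B" unfolding B_def
    by (rule continuous_on_closed_Collect_le[OF continuous_on_const cont]) simp
  have ne: "B \<noteq> {}" using t1 by (auto simp: B_def)
  have bdd: "bdd_below B" by (auto simp: B_def intro!: bdd_belowI[of _ 0])
  define ts where "ts = Inf B"
  have tsB: "ts \<in> B" unfolding ts_def by (rule closed_contains_Inf[OF ne bdd cl])
  have below: "h s < a" if "0 \<le> s" "s < ts" for s
  proof (rule ccontr)
    assume "\<not> h s < a"
    then have "s \<in> B" using that tsB by (auto simp: B_def)
    then have "ts \<le> s" unfolding ts_def by (rule cInf_lower[OF _ bdd])
    then show False using that by simp
  qed
  have ts: "0 \<le> ts" "ts \<le> T" "a \<le> h ts" using tsB by (auto simp: B_def)
  obtain x where x: "0 \<le> x" "x \<le> ts" "h x = a"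
    using IVT'[of h 0 a ts] h0 ts continuous_on_subset[OF cont, of "{0..ts}"] by force
  have "x = ts" using below[of x] x by (cases "x < ts") auto
  then show ?thesis using x ts below by auto
qed

definition clamp1 :: "real \<Rightarrow> real" where "clamp1 v = max (-1) (min 1 v)"

lemma clamp1_lip: "\<bar>clamp1 a - clamp1 b\<bar> \<le> \<bar>a - b\<bar>" by (auto simp: clamp1_def)
lemma clamp1_in: "clamp1 v \<in> {-1..1}" by (auto simp: clamp1_def)
lemma clamp1_id: "\<bar>v\<bar> \<le> 1 \<Longrightarrow> clamp1 v = v" by (auto simp: clamp1_def)

lemma norm_pair_le: "norm (p :: real \<times> real) \<le> \<bar>fst p\<bar> + \<bar>snd p\<bar>"
proof -
  obtain a b where p: "p = (a, b)" by (cases p)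
  have "norm (a, b) = norm ((a, 0) + (0, b))" by simp
  also have "\<dots> \<le> norm (a, 0::real) + norm (0::real, b)" by (rule norm_triangle_ineq)
  finally show ?thesis by (simp add: p norm_Pair)
qed
lemma fst_le_norm: "\<bar>fst (p :: real \<times> real)\<bar> \<le> norm p"
  by (cases p) (metis fst_conv norm_fst_le real_norm_def)
lemma snd_le_norm: "\<bar>snd (p :: real \<times> real)\<bar> \<le> norm p"
  by (cases p) (metis snd_conv norm_snd_le real_norm_def)
lemma norm_sq: "(norm (p :: real \<times> real))\<^sup>2 = (fst p)\<^sup>2 + (snd p)\<^sup>2"
  by (cases p) (simp add: norm_Pair)



context
  fixes d u Kz Kx k \<sigma> l \<rho> :: real and S :: "real \<Rightarrow> real"
  assumes pos: "d > 0" "u > 0" "Kz > 0" "Kx > 0" "k > 0" "\<sigma> > 0" "l > 0" "\<rho> \<ge> 0"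
    and Ssm: "smooth_fun S" and S0: "S 0 = 0" and S'0: "deriv S 0 = 1"
begin

abbreviation "F \<equiv> task_field d u 0 Kz Kx k \<sigma> l \<rho> S"

lemma abs3: fixes a b c p q r :: real shows "\<bar>p*a + q*b + r*c\<bar> \<le> \<bar>p\<bar>*\<bar>a\<bar> + \<bar>q\<bar>*\<bar>b\<bar> + \<bar>r\<bar>*\<bar>c\<bar>"
proof -
  have "\<bar>p*a + q*b + r*c\<bar> \<le> \<bar>p*a\<bar> + \<bar>q*b\<bar> + \<bar>r*c\<bar>" by (rule order_trans[OF abs_triangle_ineq]) (simp add: abs_triangle_ineq)
  then show ?thesis by (simp add: abs_mult)
qed
lemma abs2: fixes a b p q :: real shows "\<bar>p*a + q*b\<bar> \<le> \<bar>p\<bar>*\<bar>a\<bar> + \<bar>q\<bar>*\<bar>b\<bar>"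
  using abs_triangle_ineq[of "p*a" "q*b"] by (simp add: abs_mult)
lemma abs2': fixes a b p :: real shows "p \<ge> 0 \<Longrightarrow> \<bar>p*a + (-1)*b\<bar> \<le> p*\<bar>a\<bar> + \<bar>b\<bar>"
  using abs2[of p a "-1" b] by simp

lemma S_der: "(S has_real_derivative deriv S x) (at x)"
proof -
  have "((deriv ^^ 0) S) differentiable (at x)" using Ssm unfolding smooth_fun_def by blast
  then show ?thesis by (simp add: DERIV_deriv_iff_real_differentiable)
qed

lemma S'_cont: "continuous_on A (deriv S)"
proof -
  have "((deriv ^^ 1) S) differentiable (at x)" for x using Ssm unfolding smooth_fun_def by blast
  then have "isCont (deriv S) x" for x by (simp add: differentiable_imp_continuous_within)
  then show ?thesis by (simp add: continuous_at_imp_continuous_on)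
qed

lemma F_simps: "fst (F (z, x)) = - d * z + u * S z - Kz * eta \<sigma> z * (z - x)"
  "snd (F (z, x)) = (1 - eta \<sigma> z) * Kx * (\<rho> / l * tanh (k * z) - x) - eta \<sigma> z * (x - z)"
  by (simp_all add: task_field_def)

lemma field_lip: "\<exists>Lf\<ge>0. \<forall>z x z' x'. z\<in>{-1..1} \<longrightarrow> x\<in>{-1..1} \<longrightarrow> z'\<in>{-1..1} \<longrightarrow> x'\<in>{-1..1} \<longrightarrow>
   \<bar>fst (F (z,x)) - fst (F (z',x'))\<bar> + \<bar>snd (F (z,x)) - snd (F (z',x'))\<bar> \<le> Lf * (\<bar>z - z'\<bar> + \<bar>x - x'\<bar>)"
proof -
  obtain BS where BS: "BS \<ge> 0" "\<forall>x\<in>{-1..1}. \<forall>y\<in>{-1..1}. \<bar>S x - S y\<bar> \<le> BS * \<bar>x - y\<bar>"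
    using lip_C1[OF S_der S'_cont] by blast
  have ec: "continuous_on {-1..1} (\<lambda>x. eta \<sigma> x * (- x / \<sigma>\<^sup>2))"
    unfolding eta_def using pos by (intro continuous_intros) auto
  obtain BE where BE: "BE \<ge> 0" "\<forall>x\<in>{-1..1}. \<forall>y\<in>{-1..1}. \<bar>eta \<sigma> x - eta \<sigma> y\<bar> \<le> BE * \<bar>x - y\<bar>"
    using lip_C1[OF eta_deriv ec] pos by blast
  have tc: "continuous_on {-1..1} (\<lambda>x. (1 - tanh (k * x)^2) * k)"
    by (intro continuous_intros) auto
  obtain BT where BT: "BT \<ge> 0" "\<forall>x\<in>{-1..1}. \<forall>y\<in>{-1..1}. \<bar>tanh (k * x) - tanh (k * y)\<bar> \<le> BT * \<bar>x - y\<bar>"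
    using lip_C1[OF tanh_deriv tc] by blast
  define Lf where "Lf = d + u * BS + Kz * (1 + 2 * BE) + Kx * (\<rho> / l * BT + 1 + (\<rho> / l + 1) * BE) + (1 + 2 * BE)"
  have rl: "\<rho> / l \<ge> 0" using pos by simp
  have "\<bar>fst (F (z,x)) - fst (F (z',x'))\<bar> + \<bar>snd (F (z,x)) - snd (F (z',x'))\<bar> \<le> Lf * (\<bar>z - z'\<bar> + \<bar>x - x'\<bar>)"
    if h: "z\<in>{-1..1}" "x\<in>{-1..1}" "z'\<in>{-1..1}" "x'\<in>{-1..1}" for z x z' x'
  proof -
    define D where "D = \<bar>z - z'\<bar> + \<bar>x - x'\<bar>"
    have D0: "D \<ge> 0" by (simp add: D_def)
    have zD: "\<bar>z - z'\<bar> \<le> D" by (simp add: D_def)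
    have "\<bar>S z - S z'\<bar> \<le> BS * \<bar>z - z'\<bar>" using BS(2) h by blast
    then have dS: "\<bar>S z - S z'\<bar> \<le> BS * D" using mult_left_mono[OF zD BS(1)] by linarith
    have "\<bar>eta \<sigma> z - eta \<sigma> z'\<bar> \<le> BE * \<bar>z - z'\<bar>" using BE(2) h by blast
    then have dE: "\<bar>eta \<sigma> z - eta \<sigma> z'\<bar> \<le> BE * D" using mult_left_mono[OF zD BE(1)] by linarith
    have "\<bar>tanh (k * z) - tanh (k * z') \<bar> \<le> BT * \<bar>z - z'\<bar>" using BT(2) h by blast
    then have dT: "\<bar>tanh (k * z) - tanh (k * z') \<bar> \<le> BT * D" using mult_left_mono[OF zD BT(1)] by linarith
    have m1: "\<bar>eta \<sigma> z * (z - x) - eta \<sigma> z' * (z' - x')\<bar> \<le> 1 * D + 2 * (BE * D)"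
      by (rule lip_mult) (use h eta_pos[of \<sigma> z] eta_le1[of \<sigma> z] dE in \<open>auto simp: D_def\<close>)
    have m2: "\<bar>eta \<sigma> z * (x - z) - eta \<sigma> z' * (x' - z')\<bar> \<le> 1 * D + 2 * (BE * D)"
      by (rule lip_mult) (use h eta_pos[of \<sigma> z] eta_le1[of \<sigma> z] dE in \<open>auto simp: D_def\<close>)
    have A': "\<bar>\<rho> / l * tanh (k * z') - x'\<bar> \<le> \<rho> / l + 1"
    proof -
      have "\<bar>\<rho> / l * tanh (k * z')\<bar> \<le> \<rho> / l"
      proof -
        have "\<bar>\<rho> / l * tanh (k * z')\<bar> = \<rho> / l * \<bar>tanh (k * z')\<bar>"
          using rl by (simp only: abs_mult abs_of_nonneg)
        then show ?thesis using mult_left_le[OF abs_tanh_le1 rl] by simp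
      qed
      moreover have "\<bar>x'\<bar> \<le> 1" using h by auto
      ultimately show ?thesis using abs_triangle_ineq4[of "\<rho> / l * tanh (k * z')" x'] by linarith
    qed
    have dA: "\<bar>(\<rho> / l * tanh (k * z) - x) - (\<rho> / l * tanh (k * z') - x')\<bar> \<le> \<rho> / l * (BT * D) + D"
    proof -
      have "\<bar>\<rho> / l * tanh (k * z) - \<rho> / l * tanh (k * z')\<bar> \<le> \<rho> / l * (BT * D)"
      proof -
        have "\<bar>\<rho> / l * tanh (k * z) - \<rho> / l * tanh (k * z')\<bar> = \<rho> / l * \<bar>tanh (k * z) - tanh (k * z')\<bar>"
          using rl by (simp only: abs_mult abs_of_nonneg flip: right_diff_distrib)
        then show ?thesis using mult_left_mono[OF dT rl] by simp
      qed
      then show ?thesis by (auto simp: D_def)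
    qed
    have m3: "\<bar>(1 - eta \<sigma> z) * (\<rho> / l * tanh (k * z) - x) - (1 - eta \<sigma> z') * (\<rho> / l * tanh (k * z') - x')\<bar>
        \<le> 1 * (\<rho> / l * (BT * D) + D) + (\<rho> / l + 1) * (BE * D)"
      by (rule lip_mult) (use eta_pos[of \<sigma> z] eta_le1[of \<sigma> z] dE A' dA in \<open>auto\<close>)
    have e1: "\<bar>fst (F (z,x)) - fst (F (z',x'))\<bar> \<le> d * D + u * (BS * D) + Kz * (1 * D + 2 * (BE * D))"
    proof -
      have "fst (F (z,x)) - fst (F (z',x')) = (- d) * (z - z') + u * (S z - S z') + (- Kz) * (eta \<sigma> z * (z - x) - eta \<sigma> z' * (z' - x'))"
        by (simp add: F_simps algebra_simps)
      also have "\<bar>\<dots>\<bar> \<le> d * \<bar>z - z'\<bar> + u * \<bar>S z - S z'\<bar> + Kz * \<bar>eta \<sigma> z * (z - x) - eta \<sigma> z' * (z' - x')\<bar>"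
        using abs3[of "-d" "z - z'" u "S z - S z'" "-Kz"] pos by simp
      also have "\<dots> \<le> d * D + u * (BS * D) + Kz * (1 * D + 2 * (BE * D))"
        using pos dS m1 by (intro add_mono mult_left_mono) (auto simp: D_def)
      finally show ?thesis .
    qed
    have e2: "\<bar>snd (F (z,x)) - snd (F (z',x'))\<bar> \<le> Kx * (1 * (\<rho> / l * (BT * D) + D) + (\<rho> / l + 1) * (BE * D)) + (1 * D + 2 * (BE * D))"
    proof -
      have "snd (F (z,x)) - snd (F (z',x')) = Kx * ((1 - eta \<sigma> z) * (\<rho> / l * tanh (k * z) - x) - (1 - eta \<sigma> z') * (\<rho> / l * tanh (k * z') - x'))
          + (-1) * (eta \<sigma> z * (x - z) - eta \<sigma> z' * (x' - z'))"
        by (simp add: F_simps algebra_simps)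
      also have "\<bar>\<dots>\<bar> \<le> Kx * \<bar>(1 - eta \<sigma> z) * (\<rho> / l * tanh (k * z) - x) - (1 - eta \<sigma> z') * (\<rho> / l * tanh (k * z') - x')\<bar>
          + \<bar>eta \<sigma> z * (x - z) - eta \<sigma> z' * (x' - z')\<bar>"
        by (rule abs2') (use pos in simp)
      also have "\<dots> \<le> Kx * (1 * (\<rho> / l * (BT * D) + D) + (\<rho> / l + 1) * (BE * D)) + (1 * D + 2 * (BE * D))"
        using pos m2 m3 by (intro add_mono mult_left_mono) auto
      finally show ?thesis .
    qed
    have "d * D + u * (BS * D) + Kz * (1 * D + 2 * (BE * D)) +
        (Kx * (1 * (\<rho> / l * (BT * D) + D) + (\<rho> / l + 1) * (BE * D)) + (1 * D + 2 * (BE * D))) = Lf * D"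
      by (simp add: Lf_def algebra_simps)
    then show ?thesis using e1 e2 by (simp add: D_def)
  qed
  moreover have "Lf \<ge> 0" using pos BS BE BT rl by (simp add: Lf_def)
  ultimately show ?thesis by blast
qed

end


context
  fixes d u Kz Kx k \<sigma> l \<rho> :: real and S :: "real \<Rightarrow> real"
  assumes pos: "d > 0" "u > 0" "Kz > 0" "Kx > 0" "k > 0" "\<sigma> > 0" "l > 0" "\<rho> \<ge> 0"
    and Ssm: "smooth_fun S" and S0: "S 0 = 0" and S'0: "deriv S 0 = 1"
begin

abbreviation "FF \<equiv> task_field d u 0 Kz Kx k \<sigma> l \<rho> S"
lemmas FS = F_simps[OF pos Ssm S0 S'0]
lemmas SD = S_der[OF pos Ssm S0 S'0]

lemma rem:
  assumes "\<epsilon> > 0"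
  shows "\<exists>r0>0. r0 \<le> 1 \<and> (\<forall>z x. \<bar>z\<bar> < r0 \<longrightarrow>
     \<bar>fst (FF (z,x)) - ((u - d - Kz) * z + Kz * x)\<bar> \<le> \<epsilon> * (\<bar>z\<bar> + \<bar>x\<bar>) \<and>
     \<bar>snd (FF (z,x)) - (z - x)\<bar> \<le> \<epsilon> * (\<bar>z\<bar> + \<bar>x\<bar>))"
proof -
  have rl: "\<rho> / l \<ge> 0" using pos by simp
  define C where "C = Kz + Kx * (\<rho> / l) * (k + 1) + Kx + 2"
  have "0 \<le> Kx * (\<rho> / l) * (k + 1)" using pos rl by (intro mult_nonneg_nonneg) auto
  then have C: "C > 0" unfolding C_def using pos by linarith
  define e2 where "e2 = \<epsilon> / (2 * C)"
  define e1 where "e1 = \<epsilon> / (2 * u)"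
  have e1: "e1 > 0" "u * e1 = \<epsilon> / 2" using pos assms by (auto simp: e1_def)
  have e2: "e2 > 0" "C * e2 = \<epsilon> / 2" using C assms by (auto simp: e2_def)
  have "(S has_real_derivative 1) (at 0)" using SD[of 0] S'0 by simp
  from deriv0_small[OF this S0 e1(1)] obtain rS where rS: "rS > 0" "\<And>z. \<bar>z\<bar> < rS \<Longrightarrow> \<bar>S z - 1 * z\<bar> \<le> e1 * \<bar>z\<bar>"
    by blast
  have "((\<lambda>z. tanh (k * z)) has_real_derivative k) (at 0)" using tanh_deriv[of k 0] by simp
  from deriv0_small[OF this _ zero_less_one] obtain rT where rT: "rT > 0" "\<And>z. \<bar>z\<bar> < rT \<Longrightarrow> \<bar>tanh (k * z) - k * z\<bar> \<le> 1 * \<bar>z\<bar>"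
    by auto
  define r0 where "r0 = min (min rS rT) (min 1 (2 * \<sigma>\<^sup>2 * e2))"
  have r0: "r0 > 0" "r0 \<le> 1" using rS rT e2 pos by (auto simp: r0_def)
  have "\<bar>fst (FF (z,x)) - ((u - d - Kz) * z + Kz * x)\<bar> \<le> \<epsilon> * (\<bar>z\<bar> + \<bar>x\<bar>) \<and>
     \<bar>snd (FF (z,x)) - (z - x)\<bar> \<le> \<epsilon> * (\<bar>z\<bar> + \<bar>x\<bar>)" if z: "\<bar>z\<bar> < r0" for z x
  proof -
    define A where "A = \<bar>z\<bar> + \<bar>x\<bar>"
    define th where "th = 1 - eta \<sigma> z"
    have A: "A \<ge> 0" "\<bar>z\<bar> \<le> A" "\<bar>x\<bar> \<le> A" "\<bar>z - x\<bar> \<le> A" "\<bar>x - z\<bar> \<le> A" by (auto simp: A_def)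
    have th0: "0 \<le> th" using one_minus_eta[OF pos(6)] by (simp add: th_def)
    have th1: "th \<le> e2"
    proof -
      have "th \<le> z\<^sup>2 / (2 * \<sigma>\<^sup>2)" using one_minus_eta[OF pos(6)] by (simp add: th_def)
      moreover have zz: "z\<^sup>2 \<le> \<bar>z\<bar>"
      proof -
        have "\<bar>z\<bar> \<le> 1" using z r0 by linarith
        then have "\<bar>z\<bar> * \<bar>z\<bar> \<le> 1 * \<bar>z\<bar>" by (intro mult_right_mono) auto
        then show ?thesis by (simp add: power2_eq_square abs_mult_self_eq)
      qed
      ultimately have "th \<le> z\<^sup>2 / (2 * \<sigma>\<^sup>2)" by simp
      also have "z\<^sup>2 / (2 * \<sigma>\<^sup>2) \<le> \<bar>z\<bar> / (2 * \<sigma>\<^sup>2)" using pos zz by (simp add: divide_right_mono)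
      also have "\<dots> \<le> e2" using z pos by (simp add: r0_def pos_divide_le_eq mult.commute)
      finally show ?thesis .
    qed
    have Sz: "\<bar>S z - z\<bar> \<le> e1 * \<bar>z\<bar>" using rS z by (simp add: r0_def)
    have Tz: "\<bar>tanh (k * z)\<bar> \<le> (k + 1) * \<bar>z\<bar>"
    proof -
      have "\<bar>tanh (k * z) - k * z\<bar> \<le> \<bar>z\<bar>" using rT z by (simp add: r0_def)
      moreover have "\<bar>k * z\<bar> = k * \<bar>z\<bar>" using pos by (simp add: abs_mult)
      ultimately show ?thesis using abs_triangle_ineq2[of "tanh (k * z)" "k * z"] by (simp add: algebra_simps)
    qed
    have r1eq: "fst (FF (z,x)) - ((u - d - Kz) * z + Kz * x) = u * (S z - z) + Kz * (th * (z - x))"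
      by (simp add: FS th_def algebra_simps)
    have "\<bar>u * (S z - z)\<bar> \<le> u * (e1 * \<bar>z\<bar>)" using pos Sz by (simp add: abs_mult)
    also have "\<dots> = \<epsilon> / 2 * \<bar>z\<bar>" using e1 by (simp add: mult.assoc[symmetric])
    also have "\<dots> \<le> \<epsilon> / 2 * A" using A assms by (intro mult_left_mono) auto
    finally have p1: "\<bar>u * (S z - z)\<bar> \<le> \<epsilon> / 2 * A" .
    have "\<bar>Kz * (th * (z - x))\<bar> \<le> Kz * (e2 * A)"
      using pos th0 th1 A by (simp add: abs_mult mult_mono)
    also have "\<dots> \<le> C * (e2 * A)" using A e2 pos rl by (intro mult_right_mono) (auto simp: C_def)
    also have "\<dots> = \<epsilon> / 2 * A" using e2 by simp
    finally have p2: "\<bar>Kz * (th * (z - x))\<bar> \<le> \<epsilon> / 2 * A" .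
    have r1: "\<bar>fst (FF (z,x)) - ((u - d - Kz) * z + Kz * x)\<bar> \<le> \<epsilon> * A"
      unfolding r1eq using p1 p2 abs_triangle_ineq[of "u * (S z - z)" "Kz * (th * (z - x))"] by linarith
    have r2eq: "snd (FF (z,x)) - (z - x) = th * (Kx * (\<rho> / l * tanh (k * z) - x) + (x - z))"
      by (simp add: FS th_def algebra_simps)
    have B: "\<bar>Kx * (\<rho> / l * tanh (k * z) - x) + (x - z)\<bar> \<le> C * A"
    proof -
      have "\<bar>\<rho> / l * tanh (k * z)\<bar> \<le> \<rho> / l * ((k + 1) * A)"
      proof -
        have "\<bar>\<rho> / l * tanh (k * z)\<bar> = \<rho> / l * \<bar>tanh (k * z)\<bar>" using rl by (simp only: abs_mult abs_of_nonneg)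
        also have "\<dots> \<le> \<rho> / l * ((k + 1) * A)" using Tz A pos rl
          by (intro mult_left_mono) (auto intro: order_trans mult_left_mono)
        finally show ?thesis .
      qed
      then have "\<bar>\<rho> / l * tanh (k * z) - x\<bar> \<le> \<rho> / l * ((k + 1) * A) + A" using A by linarith
      then have "\<bar>Kx * (\<rho> / l * tanh (k * z) - x)\<bar> \<le> Kx * (\<rho> / l * ((k + 1) * A) + A)"
        using pos by (simp add: abs_mult mult_left_mono)
      then have "\<bar>Kx * (\<rho> / l * tanh (k * z) - x) + (x - z)\<bar> \<le> Kx * (\<rho> / l * ((k + 1) * A) + A) + A"
        using A abs_triangle_ineq[of "Kx * (\<rho> / l * tanh (k * z) - x)" "x - z"] by linarith
      also have "\<dots> \<le> C * A"
      proof -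
        have "\<forall>q. (Kz + Kx * q * (k + 1) + Kx + 2) * A = Kx * (q * ((k + 1) * A) + A) + A + (Kz + 1) * A"
          by (simp add: algebra_simps)
        then have "C * A = Kx * (\<rho> / l * ((k + 1) * A) + A) + A + (Kz + 1) * A" unfolding C_def by blast
        moreover have "(Kz + 1) * A \<ge> 0" using A pos by simp
        ultimately show ?thesis by linarith
      qed
      finally show ?thesis .
    qed
    have "\<bar>snd (FF (z,x)) - (z - x)\<bar> \<le> e2 * (C * A)"
      unfolding r2eq abs_mult using th0 th1 B by (simp add: mult_mono)
    also have "\<dots> = (C * e2) * A" by (simp add: algebra_simps)
    also have "\<dots> = \<epsilon> / 2 * A" using e2 by simp
    also have "\<dots> \<le> \<epsilon> * A" using A assms by (simp add: mult_right_mono)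
    finally show ?thesis using r1 by (simp add: A_def)
  qed
  then show ?thesis using r0 by blast
qed

end


context
  fixes d u Kz Kx k \<sigma> l \<rho> :: real and S :: "real \<Rightarrow> real"
  assumes pos: "d > 0" "u > 0" "Kz > 0" "Kx > 0" "k > 0" "\<sigma> > 0" "l > 0" "\<rho> \<ge> 0"
    and Ssm: "smooth_fun S" and S0: "S 0 = 0" and S'0: "deriv S 0 = 1"
begin

abbreviation "F8 \<equiv> task_field d u 0 Kz Kx k \<sigma> l \<rho> S"
abbreviation "cc8 \<equiv> (u - d) * min 1 Kz / (2 + 2 * Kz\<^sup>2 + \<bar>u - d\<bar> * Kz)"
abbreviation Dv8 where "Dv8 p \<equiv> 2 * (fst p + Kz * snd p) * (fst (F8 p) + Kz * snd (F8 p)) - 2 * (u - d) * Kz * snd p * snd (F8 p)"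

lemmas rem' = rem[OF pos Ssm S0 S'0]

lemma Dv_bound:
  assumes ud: "u \<noteq> d"
  shows "\<exists>r0>0. r0 \<le> 1 \<and> (\<forall>z x. \<bar>z\<bar> < r0 \<longrightarrow>
     (u < d \<longrightarrow> Dv8 (z,x) \<le> cc8 * Vf Kz (u - d) (z,x)) \<and> (d < u \<longrightarrow> cc8 * Vf Kz (u - d) (z,x) \<le> Dv8 (z,x)))"
proof -
  define e where "e = u - d"
  define m where "m = min 1 Kz"
  define MV where "MV = 2 + 2 * Kz\<^sup>2 + \<bar>e\<bar> * Kz"
  define K where "K = 4 * (1 + Kz)\<^sup>2 + 4 * \<bar>e\<bar> * Kz"
  have m: "m > 0" "m \<le> 1" "m \<le> Kz" using pos by (auto simp: m_def)
  have MV: "MV > 0" using pos by (simp add: MV_def add_pos_nonneg)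
  have K: "K > 0" using pos by (simp add: K_def add_pos_nonneg)
  have e0: "e \<noteq> 0" using ud by (simp add: e_def)
  define eps where "eps = \<bar>e\<bar> * m / K"
  have eps: "eps > 0" "eps * K = \<bar>e\<bar> * m" using e0 m K by (auto simp: eps_def)
  obtain r0 where r0: "r0 > 0" "r0 \<le> 1" and R: "\<And>z x. \<bar>z\<bar> < r0 \<Longrightarrow>
     \<bar>fst (F8 (z,x)) - ((u - d - Kz) * z + Kz * x)\<bar> \<le> eps * (\<bar>z\<bar> + \<bar>x\<bar>) \<and>
     \<bar>snd (F8 (z,x)) - (z - x)\<bar> \<le> eps * (\<bar>z\<bar> + \<bar>x\<bar>)"
    using rem'[OF eps(1)] by blast
  have "(u < d \<longrightarrow> Dv8 (z,x) \<le> cc8 * Vf Kz (u - d) (z,x)) \<and> (d < u \<longrightarrow> cc8 * Vf Kz (u - d) (z,x) \<le> Dv8 (z,x))"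
    if z: "\<bar>z\<bar> < r0" for z x
  proof -
    define r1 where "r1 = fst (F8 (z,x)) - ((u - d - Kz) * z + Kz * x)"
    define r2 where "r2 = snd (F8 (z,x)) - (z - x)"
    define N where "N = z\<^sup>2 + x\<^sup>2"
    define W where "W = z\<^sup>2 + Kz * x\<^sup>2"
    have N0: "N \<ge> 0" by (simp add: N_def)
    have f1: "fst (F8 (z,x)) = (e - Kz) * z + Kz * x + r1" by (simp add: r1_def e_def)
    have f2: "snd (F8 (z,x)) = z - x + r2" by (simp add: r2_def)
    have DvE: "Dv8 (z,x) = 2 * (z + Kz * x) * (((e - Kz) * z + Kz * x + r1) + Kz * (z - x + r2)) - 2 * e * Kz * x * (z - x + r2)"
      unfolding f1 f2 by (simp add: e_def)
    have C: "\<bar>Dv8 (z,x) - 2 * e * W\<bar> \<le> \<bar>e\<bar> * m * N"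
      unfolding DvE W_def N_def eps(2)[symmetric]
      using core[OF pos(3) less_imp_le[OF eps(1)], of r1 z x r2 e] R[OF z] K_def
      by (simp add: r1_def r2_def K_def)
    have WN: "m * N \<le> W"
    proof -
      have "m * z\<^sup>2 \<le> 1 * z\<^sup>2" using m by (intro mult_right_mono) auto
      moreover have "m * x\<^sup>2 \<le> Kz * x\<^sup>2" using m by (intro mult_right_mono) auto
      ultimately show ?thesis by (simp add: N_def W_def algebra_simps)
    qed
    have VU: "Vf Kz e (z,x) \<le> MV * N" using V_upper[OF pos(3), of e "(z,x)"] by (simp add: MV_def N_def)
    have ccE: "cc8 = e * m / MV" by (simp add: e_def m_def MV_def)
    show ?thesis
    proof (intro conjI impI)
      assume "u < d"
      then have en: "e < 0" by (simp add: e_def)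
      have "2 * e * W \<le> 2 * e * (m * N)" using WN en by (intro mult_left_mono_neg) auto
      moreover have "Dv8 (z,x) - 2 * e * W \<le> \<bar>e\<bar> * m * N" using C by (rule abs_le_D1)
      moreover have "\<bar>e\<bar> * m * N = - (e * m * N)" using en by simp
      ultimately have "Dv8 (z,x) \<le> e * m * N" by linarith
      also have "e * m * N = (e * m / MV) * (MV * N)" using MV by simp
      also have "\<dots> \<le> (e * m / MV) * Vf Kz e (z,x)"
        using VU en m MV by (intro mult_left_mono_neg) (auto simp: divide_nonpos_pos mult_neg_pos less_imp_le)
      finally show "Dv8 (z,x) \<le> cc8 * Vf Kz (u - d) (z,x)" by (simp add: ccE e_def)
    next
      assume "d < u"
      then have ep: "e > 0" by (simp add: e_def)
      have "2 * e * (m * N) \<le> 2 * e * W" using WN ep by (intro mult_left_mono) auto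
      moreover have "- (Dv8 (z,x) - 2 * e * W) \<le> \<bar>e\<bar> * m * N" using C by (rule abs_le_D2)
      moreover have "\<bar>e\<bar> * m * N = e * m * N" using ep by simp
      ultimately have "e * m * N \<le> Dv8 (z,x)" by linarith
      have "(e * m / MV) * Vf Kz e (z,x) \<le> (e * m / MV) * (MV * N)"
        using VU ep m MV by (intro mult_left_mono) auto
      also have "\<dots> = e * m * N" using MV by simp
      also have "\<dots> \<le> Dv8 (z,x)" by fact
      finally show "cc8 * Vf Kz (u - d) (z,x) \<le> Dv8 (z,x)" by (simp add: ccE e_def)
    qed
  qed
  then show ?thesis using r0 by blast
qed

end


context
  fixes d u Kz Kx k \<sigma> l \<rho> :: real and S :: "real \<Rightarrow> real"
  assumes pos: "d > 0" "u > 0" "Kz > 0" "Kx > 0" "k > 0" "\<sigma> > 0" "l > 0" "\<rho> \<ge> 0"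
    and Ssm: "smooth_fun S" and S0: "S 0 = 0" and S'0: "deriv S 0 = 1"
begin

abbreviation "F9 \<equiv> task_field d u 0 Kz Kx k \<sigma> l \<rho> S"
abbreviation "cc9 \<equiv> (u - d) * min 1 Kz / (2 + 2 * Kz\<^sup>2 + \<bar>u - d\<bar> * Kz)"
abbreviation Dv9 where "Dv9 p \<equiv> 2 * (fst p + Kz * snd p) * (fst (F9 p) + Kz * snd (F9 p)) - 2 * (u - d) * Kz * snd p * snd (F9 p)"

lemmas DB = Dv_bound[OF pos Ssm S0 S'0]

lemma FF0: "F9 (0,0) = (0,0)" by (simp add: task_field_def S0)

lemma sol_cont: "is_solution Gv f T \<Longrightarrow> continuous_on {0..T} f"
  unfolding is_solution_def
  by (metis has_vector_derivative_continuous continuous_on_eq_continuous_within)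

lemma V_sol_deriv:
  assumes "(f has_vector_derivative F9 (f t)) (at t within X)"
  shows "((\<lambda>t. Vf Kz (u - d) (f t)) has_real_derivative Dv9 (f t)) (at t within X)"
  using V_deriv[OF assms, of Kz "u - d"] by simp

lemma stable:
  assumes ud: "u < d"
  shows "loc_exp_stable_origin F9"
proof -
  obtain r0 where r0: "r0 > 0" "r0 \<le> 1" and DBl: "\<And>z x. \<bar>z\<bar> < r0 \<Longrightarrow> Dv9 (z,x) \<le> cc9 * Vf Kz (u - d) (z,x)"
    using DB ud by (metis less_irrefl)
  obtain lam where lam: "lam > 0" and VL0: "\<And>p. lam * ((fst p)\<^sup>2 + (snd p)\<^sup>2) \<le> Vf Kz (u - d) p"
    using V_lower[OF pos(3), of "u - d"] ud by auto
  define MV where "MV = 2 + 2 * Kz\<^sup>2 + \<bar>u - d\<bar> * Kz"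
  have MV: "MV > 0" using pos by (simp add: MV_def add_pos_nonneg)
  have VU: "Vf Kz (u - d) p \<le> MV * (norm p)\<^sup>2" for p using V_upper[OF pos(3), of "u - d" p] by (simp add: MV_def norm_sq)
  have VL: "lam * (norm p)\<^sup>2 \<le> Vf Kz (u - d) p" for p using VL0[of p] by (simp add: norm_sq)
  define c0 where "c0 = cc9"
  have ccn: "c0 < 0" unfolding c0_def using ud pos MV_def MV by (simp add: divide_neg_pos mult_neg_pos)
  have DBl': "\<And>z x. \<bar>z\<bar> < r0 \<Longrightarrow> Dv9 (z,x) \<le> c0 * Vf Kz (u - d) (z,x)" unfolding c0_def by (rule DBl)
  define \<delta> where "\<delta> = min r0 (r0 * sqrt (lam / MV))"
  have \<delta>: "\<delta> > 0" "\<delta> \<le> r0" using r0 lam MV by (auto simp: \<delta>_def)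
  have \<delta>sq: "MV * \<delta>\<^sup>2 \<le> lam * r0\<^sup>2"
  proof -
    have "\<delta>\<^sup>2 \<le> (r0 * sqrt (lam / MV))\<^sup>2" using \<delta> by (intro power_mono) (auto simp: \<delta>_def)
    also have "\<dots> = r0\<^sup>2 * (lam / MV)" using lam MV by (simp add: power_mult_distrib)
    finally show ?thesis using MV by (simp add: field_simps)
  qed
  define M where "M = sqrt (MV / lam)"
  define c where "c = - c0 / 2"
  have M: "M > 0" using MV lam by (simp add: M_def)
  have c: "c > 0" unfolding c_def by (rule half_gt_zero) (simp only: neg_0_less_iff_less ccn)
  have main: "\<forall>t\<in>{0..T}. norm (f t) \<le> M * exp (- c * t) * norm (f 0)"
    if T: "T \<ge> 0" and sol: "is_solution F9 f T" and f0: "norm (f 0) < \<delta>" for f T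
  proof -
    define V where "V t = Vf Kz (u - d) (f t)" for t
    have der: "(V has_real_derivative Dv9 (f t)) (at t within {0..T})" if "t \<in> {0..T}" for t
      unfolding V_def by (rule V_sol_deriv) (use sol that in \<open>auto simp: is_solution_def\<close>)
    have contn: "continuous_on {0..T} (\<lambda>t. norm (f t))"
      by (intro continuous_intros sol_cont[OF sol])
    have dec: "exp (- c0 * t') * V t' \<le> V 0"
      if t': "0 \<le> t'" "t' \<le> T" and reg: "\<And>s. 0 < s \<Longrightarrow> s < t' \<Longrightarrow> norm (f s) < r0" for t'
    proof (rule exp_mono_dec[OF der _ t'])
      fix s assume s: "0 < s" "s < t'"
      have "\<bar>fst (f s)\<bar> < r0" using fst_le_norm[of "f s"] reg[OF s] by linarith
      then show "Dv9 (f s) \<le> c0 * V s" using DBl'[of "fst (f s)" "snd (f s)"] by (simp add: V_def)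
    qed auto
    have V0: "V 0 \<le> MV * (norm (f 0))\<^sup>2" by (simp add: V_def VU)
    have reg: "\<forall>t\<in>{0..T}. norm (f t) < r0"
    proof (rule ccontr)
      assume "\<not> ?thesis"
      then obtain t1 where t1: "t1 \<in> {0..T}" "r0 \<le> norm (f t1)" by (auto simp: not_less)
      obtain ts where ts: "ts \<in> {0..T}" "norm (f ts) = r0" "\<And>s. 0 \<le> s \<Longrightarrow> s < ts \<Longrightarrow> norm (f s) < r0"
        using first_hit[OF contn _ t1] f0 \<delta> by force
      have "exp (- c0 * ts) * V ts \<le> V 0" using ts by (intro dec) auto
      moreover have "V ts \<le> exp (- c0 * ts) * V ts"
      proof -
        have "V ts \<ge> 0" using VL[of "f ts"] lam by (simp add: V_def) (smt (verit) zero_le_power2 mult_nonneg_nonneg)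
        moreover have "exp (- c0 * ts) \<ge> 1" using ccn ts by (simp add: mult_nonpos_nonneg)
        ultimately show ?thesis by (metis mult_le_cancel_right1 less_le_not_le nle_le)
      qed
      moreover have "lam * r0\<^sup>2 \<le> V ts" using VL[of "f ts"] ts by (simp add: V_def)
      moreover have "MV * (norm (f 0))\<^sup>2 < MV * \<delta>\<^sup>2"
        using MV f0 by (intro mult_strict_left_mono power_strict_mono) auto
      ultimately show False using V0 \<delta>sq by linarith
    qed
    show ?thesis
    proof
      fix t assume t: "t \<in> {0..T}"
      have "exp (- c0 * t) * V t \<le> V 0" using t reg by (intro dec) auto
      then have "V t \<le> exp (c0 * t) * V 0"
        by (simp add: exp_minus field_simps)
      also have "\<dots> \<le> exp (c0 * t) * (MV * (norm (f 0))\<^sup>2)" using V0 by (intro mult_left_mono) auto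
      finally have "lam * (norm (f t))\<^sup>2 \<le> exp (c0 * t) * (MV * (norm (f 0))\<^sup>2)"
        using VL[of "f t"] by (simp add: V_def)
      then have a: "lam * (norm (f t))\<^sup>2 \<le> exp (c0 * t) * (MV * (norm (f 0))\<^sup>2)" .
      have E: "(exp (- c * t))\<^sup>2 = exp (c0 * t)" by (simp add: c_def flip: exp_of_nat_mult)
      have M2: "M\<^sup>2 = MV / lam" using MV lam by (simp add: M_def)
      have R: "(M * exp (- c * t) * norm (f 0))\<^sup>2 = (MV / lam) * exp (c0 * t) * (norm (f 0))\<^sup>2"
        by (simp only: power_mult_distrib E M2)
      have "(norm (f t))\<^sup>2 * lam \<le> exp (c0 * t) * (MV * (norm (f 0))\<^sup>2)" using a by (simp only: mult.commute)
      then have "(norm (f t))\<^sup>2 \<le> exp (c0 * t) * (MV * (norm (f 0))\<^sup>2) / lam" by (simp only: pos_le_divide_eq[OF lam])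
      also have "\<dots> = (MV / lam) * exp (c0 * t) * (norm (f 0))\<^sup>2" by simp
      finally have "(norm (f t))\<^sup>2 \<le> (M * exp (- c * t) * norm (f 0))\<^sup>2" unfolding R .
      moreover have nn: "0 \<le> M * exp (- c * t) * norm (f 0)" using M by (intro mult_nonneg_nonneg) auto
      ultimately show "norm (f t) \<le> M * exp (- c * t) * norm (f 0)"
        by (rule power2_le_imp_le)
    qed
  qed
  show ?thesis unfolding loc_exp_stable_origin_def
    using FF0 \<delta> M c main by blast
qed


lemma unstable:
  assumes ud: "d < u"
  shows "unstable_origin F9"
proof -
  obtain r0 where r0: "r0 > 0" "r0 \<le> 1" and DBu: "\<And>z x. \<bar>z\<bar> < r0 \<Longrightarrow> cc9 * Vf Kz (u - d) (z,x) \<le> Dv9 (z,x)"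
    using DB ud by (metis less_irrefl)
  define c0 where "c0 = cc9"
  have ccp: "c0 > 0" unfolding c0_def using ud pos
    by (intro divide_pos_pos mult_pos_pos) (auto simp: add_pos_nonneg)
  have DBu': "\<And>z x. \<bar>z\<bar> < r0 \<Longrightarrow> c0 * Vf Kz (u - d) (z,x) \<le> Dv9 (z,x)" unfolding c0_def by (rule DBu)
  define MV where "MV = 2 + 2 * Kz\<^sup>2 + \<bar>u - d\<bar> * Kz"
  have MV: "MV > 0" using pos by (simp add: MV_def add_pos_nonneg)
  have VU: "Vf Kz (u - d) p \<le> MV * (norm p)\<^sup>2" for p using V_upper[OF pos(3), of "u - d" p] by (simp add: MV_def norm_sq)
  obtain Lf where Lf: "Lf \<ge> 0" and FL: "\<forall>z x z' x'. z\<in>{-1..1} \<longrightarrow> x\<in>{-1..1} \<longrightarrow> z'\<in>{-1..1} \<longrightarrow> x'\<in>{-1..1} \<longrightarrow>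
   \<bar>fst (F9 (z,x)) - fst (F9 (z',x'))\<bar> + \<bar>snd (F9 (z,x)) - snd (F9 (z',x'))\<bar> \<le> Lf * (\<bar>z - z'\<bar> + \<bar>x - x'\<bar>)"
    using field_lip[OF pos Ssm S0 S'0] by blast
  define G where "G p = F9 (clamp1 (fst p), clamp1 (snd p))" for p
  have Glip: "norm (G p - G q) \<le> (2 * Lf + 1) * norm (p - q)" for p q
  proof -
    have "norm (G p - G q) \<le> \<bar>fst (G p - G q)\<bar> + \<bar>snd (G p - G q)\<bar>" by (rule norm_pair_le)
    also have "\<dots> = \<bar>fst (F9 (clamp1 (fst p), clamp1 (snd p))) - fst (F9 (clamp1 (fst q), clamp1 (snd q)))\<bar>
        + \<bar>snd (F9 (clamp1 (fst p), clamp1 (snd p))) - snd (F9 (clamp1 (fst q), clamp1 (snd q)))\<bar>"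
      by (simp add: G_def)
    also have "\<dots> \<le> Lf * (\<bar>clamp1 (fst p) - clamp1 (fst q)\<bar> + \<bar>clamp1 (snd p) - clamp1 (snd q)\<bar>)"
      using FL clamp1_in by blast
    also have "\<dots> \<le> Lf * (\<bar>fst p - fst q\<bar> + \<bar>snd p - snd q\<bar>)"
      using Lf by (intro mult_left_mono add_mono clamp1_lip) auto
    also have "\<dots> \<le> Lf * (2 * norm (p - q))"
      using fst_le_norm[of "p - q"] snd_le_norm[of "p - q"] Lf by (intro mult_left_mono) auto
    also have "\<dots> \<le> (2 * Lf + 1) * norm (p - q)" by (simp add: algebra_simps)
    finally show ?thesis .
  qed
  have Geq: "G p = F9 p" if "norm p \<le> 1" for p
  proof -
    have "\<bar>fst p\<bar> \<le> 1" "\<bar>snd p\<bar> \<le> 1" using fst_le_norm[of p] snd_le_norm[of p] that by linarith+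
    then show ?thesis by (simp add: G_def clamp1_id)
  qed
  define \<epsilon>0 where "\<epsilon>0 = r0 / 2"
  have \<epsilon>0: "\<epsilon>0 > 0" "\<epsilon>0 < r0" "\<epsilon>0 \<le> 1" using r0 by (auto simp: \<epsilon>0_def)
  show ?thesis unfolding unstable_origin_def lyap_stable_origin_def
  proof (intro conjI notI)
    show "F9 (0,0) = (0,0)" by (rule FF0)
    assume H: "\<forall>\<epsilon>>0. \<exists>\<delta>>0. \<forall>f T. 0 \<le> T \<longrightarrow> is_solution F9 f T \<longrightarrow> norm (f 0) < \<delta> \<longrightarrow> (\<forall>t\<in>{0..T}. norm (f t) < \<epsilon>)"
    obtain \<delta> where \<delta>: "\<delta> > 0" and H\<delta>: "\<And>f T. 0 \<le> T \<Longrightarrow> is_solution F9 f T \<Longrightarrow> norm (f 0) < \<delta> \<Longrightarrow> \<forall>t\<in>{0..T}. norm (f t) < \<epsilon>0"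
      using H \<epsilon>0(1) by meson
    define s where "s = min \<delta> \<epsilon>0 / 2"
    have s: "s > 0" "s < \<delta>" "s < \<epsilon>0" using \<delta> \<epsilon>0 by (auto simp: s_def)
    define p0 where "p0 = (s, 0::real)"
    have np0: "norm p0 = s" using s by (simp add: p0_def norm_Pair)
    have Vp0: "Vf Kz (u - d) p0 = s\<^sup>2" by (simp add: Vf_def p0_def)
    define X where "X = MV * \<epsilon>0\<^sup>2 / s\<^sup>2 + 1"
    have X: "X \<ge> 1" using MV s by (simp add: X_def)
    define T1 where "T1 = ln X / c0"
    have T1: "T1 \<ge> 0" using X ccp by (simp add: T1_def)
    have eT1: "exp (c0 * T1) = X" using ccp X by (simp add: T1_def)
    have Xs: "X * s\<^sup>2 = MV * \<epsilon>0\<^sup>2 + s\<^sup>2" using s by (simp add: X_def field_simps)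
    have "\<exists>g. g 0 = p0 \<and> is_solution G g T1"
      by (rule ode_exists[where L = "2 * Lf + 1"]) (use Glip Lf T1 in auto)
    then obtain g where g0: "g 0 = p0" and gsol: "is_solution G g T1" by blast
    have contn: "continuous_on {0..T1} (\<lambda>t. norm (g t))"
      by (intro continuous_intros sol_cont[OF gsol])
    have ex: "\<exists>t1\<in>{0..T1}. \<epsilon>0 \<le> norm (g t1)"
    proof (rule ccontr)
      assume "\<not> ?thesis"
      then have small: "\<And>t. t \<in> {0..T1} \<Longrightarrow> norm (g t) < \<epsilon>0" by (auto simp: not_le)
      define V where "V t = Vf Kz (u - d) (g t)" for t
      have der: "(V has_real_derivative Dv9 (g t)) (at t within {0..T1})" if t: "t \<in> {0..T1}" for t
      proof -
        have "(g has_vector_derivative G (g t)) (at t within {0..T1})" using gsol t by (auto simp: is_solution_def)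
        moreover have "G (g t) = F9 (g t)" using small[OF t] \<epsilon>0 by (intro Geq) linarith
        ultimately show ?thesis unfolding V_def by (intro V_sol_deriv) simp
      qed
      have "V 0 \<le> exp (- c0 * T1) * V T1"
      proof (rule exp_mono_inc[OF der _ T1 order_refl])
        fix t assume t: "0 < t" "t < T1"
        have "\<bar>fst (g t)\<bar> < r0" using fst_le_norm[of "g t"] small[of t] t \<epsilon>0 by auto
        then show "c0 * V t \<le> Dv9 (g t)" using DBu'[of "fst (g t)" "snd (g t)"] by (simp add: V_def)
      qed auto
      then have "exp (c0 * T1) * V 0 \<le> exp (c0 * T1) * (exp (- c0 * T1) * V T1)"
        by (intro mult_left_mono) auto
      also have "\<dots> = V T1" by (simp add: mult.assoc[symmetric] flip: exp_add)
      finally have "X * s\<^sup>2 \<le> V T1" using eT1 Vp0 g0 by (simp add: V_def)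
      moreover have "V T1 \<le> MV * (norm (g T1))\<^sup>2" by (simp add: V_def VU)
      moreover have "MV * (norm (g T1))\<^sup>2 < MV * \<epsilon>0\<^sup>2"
        using MV small[of T1] T1 by (intro mult_strict_left_mono power_strict_mono) auto
      moreover have "s\<^sup>2 > 0" using s by simp
      ultimately show False using Xs by linarith
    qed
    then obtain t1 where t1: "t1 \<in> {0..T1}" "\<epsilon>0 \<le> norm (g t1)" by blast
    obtain T where T: "T \<in> {0..T1}" "norm (g T) = \<epsilon>0" and bef: "\<And>s. 0 \<le> s \<Longrightarrow> s < T \<Longrightarrow> norm (g s) < \<epsilon>0"
      using first_hit[OF contn _ t1] g0 np0 s by force
    have solF: "is_solution F9 g T" unfolding is_solution_def
    proof
      fix t assume t: "t \<in> {0..T}"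
      then have t1': "t \<in> {0..T1}" using T by auto
      have "(g has_vector_derivative G (g t)) (at t within {0..T1})" using gsol t1' by (auto simp: is_solution_def)
      then have "(g has_vector_derivative G (g t)) (at t within {0..T})"
        by (rule has_vector_derivative_within_subset) (use T in auto)
      moreover have "norm (g t) \<le> \<epsilon>0"
      proof (cases "t < T")
        case True then show ?thesis using bef[of t] t by auto
      next
        case False then have "t = T" using t by auto
        then show ?thesis using T by simp
      qed
      then have "G (g t) = F9 (g t)" using \<epsilon>0 by (intro Geq) linarith
      ultimately show "(g has_vector_derivative F9 (g t)) (at t within {0..T})" by simp
    qed
    have "\<forall>t\<in>{0..T}. norm (g t) < \<epsilon>0" using H\<delta>[OF _ solF] T g0 np0 s by auto
    then show False using T by auto
  qed
qed

end

theorem lemma1: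
  fixes d u Kz Kx k \<sigma> l \<rho> :: real and S :: "real \<Rightarrow> real"
  assumes "d > 0" "u > 0" "Kz > 0" "Kx > 0" "k > 0" "\<sigma> > 0" "l > 0" "\<rho> \<ge> 0"
    and "smooth_fun S" "odd_fun S" "saturating S" "S 0 = 0" "deriv S 0 = 1"
  shows "(u < d \<longrightarrow> loc_exp_stable_origin (task_field d u 0 Kz Kx k \<sigma> l \<rho> S))
       \<and> (u > d \<longrightarrow> unstable_origin (task_field d u 0 Kz Kx k \<sigma> l \<rho> S))"
  using stable[OF assms(1-9) assms(12) assms(13)] unstable[OF assms(1-9) assms(12) assms(13)] by blast

end
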